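(* Let $\mathcal G$ be a graph on $n$ vertices with graph-state distance $d'(\mathcal G)$, and let $k\ge1$ and $d\ge1$ be integers with $d\le d'(\mathcal G)$ and $$\sum_{s=1}^{d-1}3^s\binom{n}{s}<\frac{2^n-1}{2^k-1}.$$ Then there exists a linear binary code $\mathcal C\subseteq\mathbb F_2^n$ of dimension $k$ such that the additive CWS code $\mathcal Q=(\mathcal G,\mathcal C)$ (an $[[n,k]]$ stabilizer code, of dimension $2^k$) has distance at least $d$ and is pure: for every Pauli operator $E$ not proportional to the identity with $\mathrm{wgt}(E)<d$ and all $|\psi\rangle,|\varphi\rangle\in\mathcal Q$ one has $\langle\varphi|E|\psi\rangle=0$. In particular, $[[n,k,d]]$ codes with $d=\min\{d_{GV},d'(\mathcal G)\}$ exist for the graph $\mathcal G$, where $d_{GV}$ is the largest $d$ satisfying the displayed inequality.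
   Context: A Pauli operator on $n$ qubits is, up to a phase, $X^{\mathbf v}Z^{\mathbf u}$ with $\mathbf v,\mathbf u\in\{0,1\}^n$; its weight is the number of qubits on which it acts nontrivially. For a subspace $\mathcal Q$ with orthonormal basis $\{|i\rangle\}$, $E$ is detectable if $\langle j|E|i\rangle=C_E\delta_{ij}$ with $C_E$ independent of $i,j$; the distance is the smallest weight of a non-detectable Pauli operator. Let $\mathcal G$ be a simple graph on $\{1,\dots,n\}$ with adjacency matrix $R$ (symmetric, zero diagonal) and rows $\mathbf r_i$; $S_i=X_iZ^{\mathbf r_i}$ are the graph-stabilizer generators, generating the abelian group $\mathscr S_{\mathcal G}$ with unique stabilized state (graph state) $|s\rangle$. The graph-state distance $d'(\mathcal G)$ is the minimum weight of an element of $\mathscr S_{\mathcal G}$ not proportional to the identity. For a binary code $\mathcal C$, the CWS code is $(\mathcal G,\mathcal C)=\operatorname{span}\{Z^{\mathbf c}|s\rangle:\mathbf c\in\mathcal C\}$. *)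

theory Defs
  imports Complex_Main
begin

text \<open>Binary vectors in F_2^n are functions nat => bool vanishing outside {0..<n}.
  Qubits / vertices are indexed 0..n-1.\<close>

type_synonym bvec = "nat \<Rightarrow> bool"

definition vecs :: "nat \<Rightarrow> bvec set" where
  "vecs n = {x. \<forall>i. n \<le> i \<longrightarrow> \<not> x i}"

definition vzero :: bvec where "vzero = (\<lambda>_. False)"

definition vadd :: "bvec \<Rightarrow> bvec \<Rightarrow> bvec" where
  "vadd x y = (\<lambda>i. x i \<noteq> y i)"

definition unitv :: "nat \<Rightarrow> bvec" where
  "unitv i = (\<lambda>j. j = i)"

definition dotp :: "nat \<Rightarrow> bvec \<Rightarrow> bvec \<Rightarrow> bool" where
  "dotp n u x = odd (card {i. i < n \<and> u i \<and> x i})"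

text \<open>n-qubit states: complex amplitudes on the computational basis {|x>, x in F_2^n}\<close>
type_synonym qstate = "bvec \<Rightarrow> complex"

definition qinner :: "nat \<Rightarrow> qstate \<Rightarrow> qstate \<Rightarrow> complex" where
  "qinner n phi psi = (\<Sum>x\<in>vecs n. cnj (phi x) * psi x)"

text \<open>Pauli operator X^v Z^u: Z^u|x> = (-1)^(u.x)|x>, X^v|x> = |x+v>.\<close>
definition pauli :: "nat \<Rightarrow> bvec \<Rightarrow> bvec \<Rightarrow> qstate \<Rightarrow> qstate" where
  "pauli n v u psi = (\<lambda>y. (if dotp n u (vadd y v) then -1 else 1) * psi (vadd y v))"

definition wgt :: "nat \<Rightarrow> bvec \<Rightarrow> bvec \<Rightarrow> nat" where
  "wgt n v u = card {i. i < n \<and> (v i \<or> u i)}"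

definition simple_graph :: "nat \<Rightarrow> (nat \<Rightarrow> nat \<Rightarrow> bool) \<Rightarrow> bool" where
  "simple_graph n E = (\<forall>i<n. \<forall>j<n. (E i j = E j i) \<and> \<not> E i i)"

definition adj_row :: "nat \<Rightarrow> (nat \<Rightarrow> nat \<Rightarrow> bool) \<Rightarrow> nat \<Rightarrow> bvec" where
  "adj_row n E i = (\<lambda>j. j < n \<and> E i j)"

text \<open>The graph-stabilizer group, with Pauli operators taken modulo phases (pairs (v,u)
  standing for X^v Z^u); it is generated by S_i = X_i Z^(r_i). Multiplication of
  Paulis modulo phase is componentwise addition over F_2.\<close>
inductive_set stab_group :: "nat \<Rightarrow> (nat \<Rightarrow> nat \<Rightarrow> bool) \<Rightarrow> (bvec \<times> bvec) set"
  for n E where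
  one: "(vzero, vzero) \<in> stab_group n E"
| mult: "P \<in> stab_group n E \<Longrightarrow> i < n \<Longrightarrow>
          (vadd (fst P) (unitv i), vadd (snd P) (adj_row n E i)) \<in> stab_group n E"

definition graph_state_distance :: "nat \<Rightarrow> (nat \<Rightarrow> nat \<Rightarrow> bool) \<Rightarrow> nat" where
  "graph_state_distance n E =
     Min {wgt n v u | v u. (v, u) \<in> stab_group n E \<and> (v, u) \<noteq> (vzero, vzero)}"

definition is_graph_state :: "nat \<Rightarrow> (nat \<Rightarrow> nat \<Rightarrow> bool) \<Rightarrow> qstate \<Rightarrow> bool" where
  "is_graph_state n E s =
     ((\<forall>x. x \<notin> vecs n \<longrightarrow> s x = 0) \<and> (\<exists>x\<in>vecs n. s x \<noteq> 0) \<and>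
      (\<forall>i<n. pauli n (unitv i) (adj_row n E i) s = s))"

definition qspan :: "qstate set \<Rightarrow> qstate set" where
  "qspan B = {psi. \<exists>a. psi = (\<lambda>y. \<Sum>b\<in>B. a b * b y)}"

definition cws_code :: "nat \<Rightarrow> qstate \<Rightarrow> bvec set \<Rightarrow> qstate set" where
  "cws_code n s C = qspan ((\<lambda>c. pauli n vzero c s) ` C)"

definition linear_code :: "nat \<Rightarrow> nat \<Rightarrow> bvec set \<Rightarrow> bool" where
  "linear_code n k C = (C \<subseteq> vecs n \<and> vzero \<in> C \<and>
      (\<forall>x\<in>C. \<forall>y\<in>C. vadd x y \<in> C) \<and> card C = 2 ^ k)"

definition orthonormal_basis :: "nat \<Rightarrow> qstate set \<Rightarrow> qstate set \<Rightarrow> bool" where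
  "orthonormal_basis n Q B = (finite B \<and> B \<subseteq> Q \<and> qspan B = Q \<and>
      (\<forall>b\<in>B. \<forall>b'\<in>B. qinner n b b' = (if b = b' then 1 else 0)))"

definition detectable :: "nat \<Rightarrow> qstate set \<Rightarrow> bvec \<Rightarrow> bvec \<Rightarrow> bool" where
  "detectable n Q v u = (\<forall>B. orthonormal_basis n Q B \<longrightarrow>
      (\<exists>c. \<forall>i\<in>B. \<forall>j\<in>B. qinner n j (pauli n v u i) = (if i = j then c else 0)))"

definition distance_ge :: "nat \<Rightarrow> qstate set \<Rightarrow> nat \<Rightarrow> bool" where
  "distance_ge n Q d = (\<forall>v\<in>vecs n. \<forall>u\<in>vecs n. wgt n v u < d \<longrightarrow> detectable n Q v u)"

definition pure_code :: "nat \<Rightarrow> qstate set \<Rightarrow> nat \<Rightarrow> bool" where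
  "pure_code n Q d = (\<forall>v\<in>vecs n. \<forall>u\<in>vecs n. (v, u) \<noteq> (vzero, vzero) \<longrightarrow> wgt n v u < d \<longrightarrow>
      (\<forall>psi\<in>Q. \<forall>phi\<in>Q. qinner n phi (pauli n v u psi) = 0))"

end

theory Submission
  imports Defs "HOL-Library.FuncSet"
begin

definition sg :: "bool \<Rightarrow> complex" where "sg b = (if b then -1 else 1)"

lemma sg_xor: "sg (a \<noteq> b) = sg a * sg b" by (simp add: sg_def)
lemma sg_sq: "sg a * sg a = 1" by (simp add: sg_def)

lemma pauli_sg: "pauli n v u psi = (\<lambda>y. sg (dotp n u (vadd y v)) * psi (vadd y v))"
  by (simp add: pauli_def sg_def)

lemma odd_card_Suc: "odd (card {i. i < Suc n \<and> P i}) = (odd (card {i. i < n \<and> P i}) \<noteq> P n)"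
proof -
  have fin: "finite {i. i < n \<and> P i}" by simp
  show ?thesis
  proof (cases "P n")
    case True
    then have "{i. i < Suc n \<and> P i} = insert n {i. i < n \<and> P i}" by (auto simp: less_Suc_eq)
    then show ?thesis using True fin by simp
  next
    case False
    then have "{i. i < Suc n \<and> P i} = {i. i < n \<and> P i}" by (auto simp: less_Suc_eq)
    then show ?thesis using False by simp
  qed
qed

lemma dotp_0[simp]: "dotp 0 u x = False" by (simp add: dotp_def)

lemma dotp_Suc: "dotp (Suc n) u x = (dotp n u x \<noteq> (u n \<and> x n))"
  unfolding dotp_def by (rule odd_card_Suc)

lemma dotp_add2: "dotp n u (vadd x y) = (dotp n u x \<noteq> dotp n u y)"
  by (induction n) (auto simp: dotp_Suc vadd_def)

lemma dotp_comm: "dotp n u x = dotp n x u"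
  unfolding dotp_def by (simp add: conj_commute)

lemma dotp_add1: "dotp n (vadd x y) u = (dotp n x u \<noteq> dotp n y u)"
  by (metis dotp_add2 dotp_comm)

lemma dotp_zero1[simp]: "dotp n vzero x = False" by (simp add: dotp_def vzero_def)
lemma dotp_zero2[simp]: "dotp n x vzero = False" by (simp add: dotp_def vzero_def)

lemma dotp_unit: "i < n \<Longrightarrow> dotp n w (unitv i) = w i"
proof -
  assume i: "i < n"
  have "{j. j < n \<and> w j \<and> unitv i j} = (if w i then {i} else {})"
    using i by (auto simp: unitv_def)
  then show ?thesis by (simp add: dotp_def)
qed

lemma vadd_comm: "vadd x y = vadd y x" by (auto simp: vadd_def)
lemma vadd_assoc: "vadd (vadd x y) z = vadd x (vadd y z)" by (auto simp: vadd_def)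
lemma vadd_lcomm: "vadd x (vadd y z) = vadd y (vadd x z)" by (auto simp: vadd_def)
lemmas vadd_ac = vadd_comm vadd_assoc vadd_lcomm
lemma vadd_self[simp]: "vadd x x = vzero" by (auto simp: vadd_def vzero_def)
lemma vadd_self2[simp]: "vadd x (vadd x y) = y" by (auto simp: vadd_def)
lemma vadd_zero[simp]: "vadd x vzero = x" "vadd vzero x = x" by (auto simp: vadd_def vzero_def)

lemma vadd_vecs: "x \<in> vecs n \<Longrightarrow> y \<in> vecs n \<Longrightarrow> vadd x y \<in> vecs n"
  by (auto simp: vecs_def vadd_def)
lemma vzero_vecs[simp]: "vzero \<in> vecs n" by (simp add: vecs_def vzero_def)
lemma unitv_vecs: "i < n \<Longrightarrow> unitv i \<in> vecs n" by (auto simp: vecs_def unitv_def)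
lemma adj_row_vecs: "adj_row n E i \<in> vecs n" by (auto simp: vecs_def adj_row_def)

lemma vecs_image: "vecs n = (\<lambda>T i. i \<in> T) ` Pow {..<n}"
proof
  show "vecs n \<subseteq> (\<lambda>T i. i \<in> T) ` Pow {..<n}"
  proof
    fix x assume x: "x \<in> vecs n"
    have "{i. x i} \<subseteq> {..<n}" using x by (auto simp: vecs_def not_le[symmetric])
    moreover have "x = (\<lambda>i. i \<in> {i. x i})" by simp
    ultimately show "x \<in> (\<lambda>T i. i \<in> T) ` Pow {..<n}" by blast
  qed
  show "(\<lambda>T i. i \<in> T) ` Pow {..<n} \<subseteq> vecs n" by (auto simp: vecs_def)
qed

lemma inj_charf: "inj (\<lambda>T i. i \<in> (T::nat set))"
  by (auto simp: inj_def fun_eq_iff)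

lemma finite_vecs[simp]: "finite (vecs n)" by (simp add: vecs_image)

lemma card_vecs: "card (vecs n) = 2 ^ n"
  unfolding vecs_image
  by (subst card_image) (auto intro: inj_on_subset[OF inj_charf] simp: card_Pow)

lemma cnj_sg[simp]: "cnj (sg b) = sg b" by (simp add: sg_def)

lemma sum_shift:
  assumes "a \<in> vecs n"
  shows "(\<Sum>y\<in>vecs n. f y) = (\<Sum>z\<in>vecs n. f (vadd z a))"
  by (rule sum.reindex_bij_witness[where i="\<lambda>z. vadd z a" and j="\<lambda>y. vadd y a"])
     (auto simp: assms vadd_vecs vadd_assoc)

lemma pauli_adj:
  assumes "a \<in> vecs n"
  shows "qinner n (pauli n a b phi) psi = sg (dotp n b a) * qinner n phi (pauli n a b psi)"
proof -
  have "qinner n (pauli n a b phi) psi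
      = (\<Sum>y\<in>vecs n. cnj (sg (dotp n b (vadd y a)) * phi (vadd y a)) * psi y)"
    by (simp add: qinner_def pauli_sg)
  also have "\<dots> = (\<Sum>z\<in>vecs n. cnj (sg (dotp n b (vadd (vadd z a) a)) * phi (vadd (vadd z a) a)) * psi (vadd z a))"
    by (rule sum_shift[OF assms])
  also have "\<dots> = (\<Sum>z\<in>vecs n. sg (dotp n b a) * (cnj (phi z) * (sg (dotp n b (vadd z a)) * psi (vadd z a))))"
    by (rule sum.cong) (auto simp: vadd_assoc dotp_add2 sg_def)
  also have "\<dots> = sg (dotp n b a) * qinner n phi (pauli n a b psi)"
    by (simp add: qinner_def pauli_sg sum_distrib_left)
  finally show ?thesis .
qed

lemma pauli_comm:
  "pauli n a b (pauli n v w psi) = (\<lambda>y. sg (dotp n b v \<noteq> dotp n w a) * pauli n v w (pauli n a b psi) y)"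
proof
  fix y
  have e: "vadd (vadd y a) v = vadd (vadd y v) a" by (simp add: vadd_ac)
  show "pauli n a b (pauli n v w psi) y = sg (dotp n b v \<noteq> dotp n w a) * pauli n v w (pauli n a b psi) y"
    unfolding pauli_sg e by (auto simp: dotp_add2 sg_def vadd_assoc)
qed

lemma qinner_scale: "qinner n phi (\<lambda>y. c * f y) = c * qinner n phi f"
  by (simp add: qinner_def sum_distrib_left mult_ac)

lemma key:
  assumes gs: "is_graph_state n E s" and sgr: "simple_graph n E" and i: "i < n"
    and ne: "dotp n (adj_row n E i) v \<noteq> w i"
  shows "qinner n s (pauli n v w s) = 0"
proof -
  let ?S = "pauli n (unitv i) (adj_row n E i)"
  have Ss: "?S s = s" using gs i by (simp add: is_graph_state_def)
  have Eii: "\<not> E i i" using sgr i by (simp add: simple_graph_def)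
  have d0: "dotp n (adj_row n E i) (unitv i) = False"
    using i Eii by (simp add: dotp_unit adj_row_def)
  have dw: "dotp n w (unitv i) = w i" using i by (simp add: dotp_unit)
  have "qinner n s (pauli n v w s) = qinner n (?S s) (pauli n v w s)" by (simp add: Ss)
  also have "\<dots> = qinner n s (?S (pauli n v w s))"
    using pauli_adj[OF unitv_vecs[OF i]] d0 by (simp add: sg_def)
  also have "?S (pauli n v w s) = (\<lambda>y. (-1) * pauli n v w s y)"
    unfolding pauli_comm Ss using ne dw by (simp add: sg_def)
  also have "qinner n s \<dots> = - qinner n s (pauli n v w s)"
    by (simp add: qinner_def sum_negf)
  finally show ?thesis by simp
qed

lemma qinner_sum_right: "qinner n phi (\<lambda>y. \<Sum>b\<in>B. c b * g b y) = (\<Sum>b\<in>B. c b * qinner n phi (g b))"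
  unfolding qinner_def by (simp add: sum_distrib_left mult_ac sum.swap[of _ B])

lemma qinner_sum_left: "qinner n (\<lambda>y. \<Sum>b\<in>B. c b * b y) g = (\<Sum>b\<in>B. cnj (c b) * qinner n b g)"
  unfolding qinner_def by (simp add: sum_distrib_left sum_distrib_right mult_ac sum.swap[of _ B] cnj_sum)

lemma pauli_lin: "pauli n v u (\<lambda>y. \<Sum>b\<in>B. c b * g b y) = (\<lambda>y. \<Sum>b\<in>B. c b * pauli n v u (g b) y)"
  by (simp add: pauli_sg sum_distrib_left mult_ac)

lemma qinner_span_zero:
  assumes "\<forall>b\<in>B. \<forall>b'\<in>B. qinner n b' (pauli n v u b) = 0"
    and "psi \<in> qspan B" and "phi \<in> qspan B"
  shows "qinner n phi (pauli n v u psi) = 0"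
proof -
  obtain a where a: "psi = (\<lambda>y. \<Sum>b\<in>B. a b * b y)" using assms(2) by (auto simp: qspan_def)
  obtain a' where a': "phi = (\<lambda>y. \<Sum>b\<in>B. a' b * b y)" using assms(3) by (auto simp: qspan_def)
  have "qinner n phi (pauli n v u psi) = (\<Sum>b\<in>B. a b * qinner n phi (pauli n v u b))"
    unfolding a pauli_lin qinner_sum_right ..
  also have "\<dots> = 0"
    unfolding a' qinner_sum_left using assms(1) by simp
  finally show ?thesis .
qed

lemma pauli_Z_right: "pauli n v u (pauli n vzero c psi) = pauli n v (vadd u c) psi"
  by (auto simp: pauli_sg dotp_add1 sg_def)

lemma pauli_Z_left: "pauli n vzero c (pauli n v w psi) = (\<lambda>y. sg (dotp n c v) * pauli n v (vadd w c) psi y)"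
  by (auto simp: pauli_sg dotp_add1 dotp_add2 sg_def dotp_comm[of n c])

lemma pauli_id: "pauli n vzero vzero psi = psi"
  by (simp add: pauli_sg sg_def)

lemma stab_vecs: "P \<in> stab_group n E \<Longrightarrow> fst P \<in> vecs n \<and> snd P \<in> vecs n"
  by (induction rule: stab_group.induct) (auto simp: vadd_vecs unitv_vecs adj_row_vecs)

lemma stab_lemma:
  "m \<le> n \<Longrightarrow> v \<in> vecs m \<Longrightarrow>
   (v, \<lambda>i. i < n \<and> odd (card {j. j < m \<and> v j \<and> E j i})) \<in> stab_group n E"
proof (induction m arbitrary: v)
  case 0
  then have "v = vzero" by (auto simp: vecs_def vzero_def)
  then show ?case using stab_group.one[of n E] by (simp add: vzero_def)
next
  case (Suc m)
  let ?v' = "v(m := False)"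
  have v': "?v' \<in> vecs m" using Suc.prems(2) by (auto simp: vecs_def le_Suc_eq)
  have IH: "(?v', \<lambda>i. i < n \<and> odd (card {j. j < m \<and> ?v' j \<and> E j i})) \<in> stab_group n E"
    by (rule Suc.IH[OF _ v']) (use Suc.prems(1) in simp)
  have same: "\<And>i. {j. j < m \<and> ?v' j \<and> E j i} = {j. j < m \<and> v j \<and> E j i}" by auto
  have cs: "\<And>i. odd (card {j. j < Suc m \<and> v j \<and> E j i}) = (odd (card {j. j < m \<and> v j \<and> E j i}) \<noteq> (v m \<and> E m i))"
    by (rule odd_card_Suc)
  show ?case
  proof (cases "v m")
    case True
    have m: "m < n" using Suc.prems(1) by simp
    from stab_group.mult[OF IH m]
    have "(vadd ?v' (unitv m), vadd (\<lambda>i. i < n \<and> odd (card {j. j < m \<and> ?v' j \<and> E j i})) (adj_row n E m)) \<in> stab_group n E"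
      by simp
    moreover have "vadd ?v' (unitv m) = v" using True by (auto simp: vadd_def unitv_def)
    moreover have "vadd (\<lambda>i. i < n \<and> odd (card {j. j < m \<and> ?v' j \<and> E j i})) (adj_row n E m)
        = (\<lambda>i. i < n \<and> odd (card {j. j < Suc m \<and> v j \<and> E j i}))"
      unfolding same cs using True by (auto simp: vadd_def adj_row_def)
    ultimately show ?thesis by simp
  next
    case False
    then have "?v' = v" by (auto simp: fun_eq_iff)
    with IH show ?thesis unfolding same cs using False by simp
  qed
qed

definition Rv :: "nat \<Rightarrow> (nat \<Rightarrow> nat \<Rightarrow> bool) \<Rightarrow> bvec \<Rightarrow> bvec" where
  "Rv n E v = (\<lambda>i. i < n \<and> dotp n (adj_row n E i) v)"

lemma Rv_vecs: "Rv n E v \<in> vecs n" by (simp add: Rv_def vecs_def)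

lemma Rv_stab:
  assumes "simple_graph n E" "v \<in> vecs n"
  shows "(v, Rv n E v) \<in> stab_group n E"
proof -
  have "Rv n E v = (\<lambda>i. i < n \<and> odd (card {j. j < n \<and> v j \<and> E j i}))"
  proof
    fix i
    show "Rv n E v i = (i < n \<and> odd (card {j. j < n \<and> v j \<and> E j i}))"
    proof (cases "i < n")
      case True
      have "{j. j < n \<and> adj_row n E i j \<and> v j} = {j. j < n \<and> v j \<and> E j i}"
        using assms(1) True by (auto simp: adj_row_def simple_graph_def)
      then show ?thesis using True by (simp add: Rv_def dotp_def)
    qed (simp add: Rv_def)
  qed
  then show ?thesis using stab_lemma[OF le_refl assms(2)] by simp
qed

lemma gsd_le:
  assumes "(v, u) \<in> stab_group n E" "(v, u) \<noteq> (vzero, vzero)"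
  shows "graph_state_distance n E \<le> wgt n v u"
proof -
  have "{wgt n v u | v u. (v, u) \<in> stab_group n E \<and> (v, u) \<noteq> (vzero, vzero)}
        \<subseteq> (\<lambda>(v, u). wgt n v u) ` (vecs n \<times> vecs n)"
    using stab_vecs by fastforce
  then have "finite {wgt n v u | v u. (v, u) \<in> stab_group n E \<and> (v, u) \<noteq> (vzero, vzero)}"
    by (rule finite_subset) simp
  then show ?thesis unfolding graph_state_distance_def
    by (rule Min_le) (use assms in blast)
qed

lemma wgt_zero:
  assumes "v \<in> vecs n" "u \<in> vecs n" "wgt n v u = 0"
  shows "v = vzero \<and> u = vzero"
proof -
  have "{i. i < n \<and> (v i \<or> u i)} = {}" using assms(3) by (simp add: wgt_def)
  then show ?thesis using assms(1,2) by (auto simp: vecs_def vzero_def fun_eq_iff) (meson not_le)+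
qed

definition code :: "bvec \<Rightarrow> bvec \<Rightarrow> nat \<Rightarrow> nat" where
  "code v u i = (if v i \<and> u i then 3 else if v i then 1 else 2)"

lemma card_wgt_s:
  "card {(v, u). v \<in> vecs n \<and> u \<in> vecs n \<and> wgt n v u = s} \<le> 3 ^ s * (n choose s)"
proof -
  let ?P = "{(v, u). v \<in> vecs n \<and> u \<in> vecs n \<and> wgt n v u = s}"
  let ?A = "{A. A \<subseteq> {..<n} \<and> card A = s}"
  let ?T = "Sigma ?A (\<lambda>A. A \<rightarrow>\<^sub>E {1,2,3::nat})"
  define f where "f = (\<lambda>(v, u). ({i. i < n \<and> (v i \<or> u i)}, restrict (code v u) {i. i < n \<and> (v i \<or> u i)}))"
  have finA: "finite ?A" by (rule finite_subset[of _ "Pow {..<n}"]) auto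
  have cT: "card ?T = 3 ^ s * (n choose s)"
  proof -
    have "card ?T = (\<Sum>A\<in>?A. card (A \<rightarrow>\<^sub>E {1,2,3::nat}))"
      using finA by (intro card_SigmaI) (auto intro!: finite_PiE dest: finite_subset[OF _ finite_lessThan])
    also have "\<dots> = (\<Sum>A\<in>?A. 3 ^ s)"
    proof (rule sum.cong)
      fix A assume A: "A \<in> ?A"
      have c3: "card {1,2,3::nat} = 3" by simp
      from A have "finite A" by (auto dest: finite_subset[OF _ finite_lessThan])
      then have "card (A \<rightarrow>\<^sub>E {1,2,3::nat}) = (\<Prod>i\<in>A. card {1,2,3::nat})" by (rule card_PiE)
      also have "\<dots> = 3 ^ card A" by (simp only: prod_constant c3)
      finally show "card (A \<rightarrow>\<^sub>E {1,2,3::nat}) = 3 ^ s" using A by simp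
    qed simp
    also have "\<dots> = 3 ^ s * (n choose s)" using n_subsets[of "{..<n}" s] by simp
    finally show ?thesis .
  qed
  have inj: "inj_on f ?P"
  proof (rule inj_onI)
    fix x y assume x: "x \<in> ?P" and y: "y \<in> ?P" and fxy: "f x = f y"
    obtain v u where xv: "x = (v, u)" by (cases x)
    obtain v' u' where yv: "y = (v', u')" by (cases y)
    have vs: "v \<in> vecs n" "u \<in> vecs n" "v' \<in> vecs n" "u' \<in> vecs n" using x y xv yv by auto
    have S: "{i. i < n \<and> (v i \<or> u i)} = {i. i < n \<and> (v' i \<or> u' i)}"
      and R: "restrict (code v u) {i. i < n \<and> (v i \<or> u i)} = restrict (code v' u') {i. i < n \<and> (v' i \<or> u' i)}"
      using fxy unfolding xv yv f_def prod.case prod.inject by blast+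
    have "v i = v' i \<and> u i = u' i" for i
    proof (cases "i < n")
      case False then show ?thesis using vs by (auto simp: vecs_def)
    next
      case True
      show ?thesis
      proof (cases "v i \<or> u i")
        case True
        with \<open>i < n\<close> have i1: "i \<in> {i. i < n \<and> (v i \<or> u i)}" by simp
        with S have i2: "i \<in> {i. i < n \<and> (v' i \<or> u' i)}" by simp
        have "code v u i = code v' u' i" using fun_cong[OF R, of i] unfolding restrict_apply'[OF i1] restrict_apply'[OF i2] .
        then show ?thesis using i1 i2 by (auto simp: code_def split: if_splits)
      next
        case False
        then have "i \<notin> {i. i < n \<and> (v' i \<or> u' i)}" using S by blast
        then show ?thesis using False \<open>i < n\<close> by auto
      qed
    qed
    then show "x = y" using xv yv by (auto simp: fun_eq_iff)
  qed
  have sub: "f ` ?P \<subseteq> ?T"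
  proof
    fix z assume "z \<in> f ` ?P"
    then obtain v u where vu: "(v, u) \<in> ?P" and z: "z = f (v, u)" by blast
    let ?B = "{i. i < n \<and> (v i \<or> u i)}"
    have "?B \<in> ?A" using vu by (auto simp: wgt_def)
    moreover have "restrict (code v u) ?B \<in> ?B \<rightarrow>\<^sub>E {1,2,3::nat}"
      unfolding restrict_PiE_iff by (auto simp: code_def)
    ultimately show "z \<in> ?T" unfolding z f_def by simp
  qed
  have finT: "finite ?T" using finA by (auto intro!: finite_PiE dest: finite_subset[OF _ finite_lessThan])
  show ?thesis using card_inj_on_le[OF inj sub finT] cT by simp
qed

lemma numeric:
  fixes a n k :: nat and M :: real
  assumes k1: "1 \<le> k" and kn: "k \<le> n" and aM: "real a \<le> M"
    and M: "M < (2 ^ n - 1) / (2 ^ k - 1)"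
  shows "\<forall>j<k. (a + 1) * 2 ^ j < (2::nat) ^ n"
proof -
  define K :: nat where "K = 2 ^ k"
  define N :: nat where "N = 2 ^ n"
  have K2: "2 \<le> K" unfolding K_def using k1
    by (metis power_increasing power_one_right zero_less_numeral one_le_numeral)
  have KN: "K \<le> N" unfolding K_def N_def using kn by (simp add: power_increasing)
  have rK: "real K = 2 ^ k" by (simp add: K_def)
  have rN: "real N = 2 ^ n" by (simp add: N_def)
  have pos: "(0::real) < 2 ^ k - 1" using K2 rK by linarith
  have "real a < (2 ^ n - 1) / (2 ^ k - 1)" using aM M by linarith
  then have "real a * (2 ^ k - 1) < 2 ^ n - 1" using pos by (simp add: pos_less_divide_eq)
  then have "real a * (real K - 1) < real N - 1" using rK rN by simp
  then have "real (a * (K - 1) + 1) < real N" using K2 by (simp add: of_nat_diff algebra_simps)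
  then have h: "a * (K - 1) + 1 < N" by (simp only: of_nat_less_iff)
  have main: "(a + 1) * K < 2 * N"
  proof -
    define ai where "ai = int a"
    define Ki where "Ki = int K"
    define Ni where "Ni = int N"
    have h': "ai * (Ki - 1) + 1 < Ni" using h K2 unfolding ai_def Ki_def Ni_def
      by (metis of_nat_1 of_nat_add of_nat_diff of_nat_less_iff of_nat_mult le_trans one_le_numeral)
    have K2': "2 \<le> Ki" "Ki \<le> Ni" "0 \<le> ai" using K2 KN unfolding Ki_def Ni_def ai_def by auto
    have p1: "0 \<le> (Ki - 2) * (Ni - Ki)" using K2' by simp
    have "(Ki - 1) * (ai + Ki - Ni - 1) < 0"
      using h' p1 by (simp add: algebra_simps)
    then have "ai + Ki - Ni - 1 < 0" using K2' by (simp add: mult_less_0_iff)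
    then have "(ai + 1) * Ki < 2 * Ni" using h' by (simp add: algebra_simps)
    then have "int ((a + 1) * K) < int (2 * N)" unfolding ai_def Ki_def Ni_def by (simp add: algebra_simps)
    then show ?thesis by (simp only: of_nat_less_iff)
  qed
  show ?thesis
  proof (intro allI impI)
    fix j assume j: "j < k"
    have "(a + 1) * 2 ^ j \<le> (a + 1) * 2 ^ (k - 1)"
      using j by (intro mult_le_mono2 power_increasing) auto
    moreover have "2 * 2 ^ (k - 1) = K" unfolding K_def using k1
      by (metis Suc_diff_1 less_le_trans zero_less_one power_Suc)
    then have "(a + 1) * K = 2 * ((a + 1) * 2 ^ (k - 1))" by (metis mult.left_commute)
    ultimately show "(a + 1) * 2 ^ j < 2 ^ n" using main unfolding N_def by linarith
  qed
qed

lemma greedy: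
  assumes finS: "finite S" and Sv: "S \<subseteq> vecs n" and S0: "vzero \<notin> S"
    and bnd: "\<forall>j'<k. (card S + 1) * 2 ^ j' < (2::nat) ^ n"
  shows "j \<le> k \<Longrightarrow> \<exists>V. V \<subseteq> vecs n \<and> vzero \<in> V \<and> (\<forall>x\<in>V. \<forall>y\<in>V. vadd x y \<in> V)
                 \<and> card V = 2 ^ j \<and> V \<inter> S = {}"
proof (induction j)
  case 0
  show ?case
    by (rule exI[of _ "{vzero}"]) (use S0 in auto)
next
  case (Suc j)
  then obtain V where V: "V \<subseteq> vecs n" "vzero \<in> V" "\<forall>x\<in>V. \<forall>y\<in>V. vadd x y \<in> V"
    "card V = 2 ^ j" "V \<inter> S = {}" by auto
  have finV: "finite V" using V(1) finite_vecs finite_subset by blast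
  define SV where "SV = (\<lambda>(s, w). vadd s w) ` (S \<times> V)"
  have "card SV \<le> card (S \<times> V)" unfolding SV_def by (rule card_image_le) (use finS finV in simp)
  then have cSV: "card SV \<le> card S * 2 ^ j" using V(4) by (simp add: card_cartesian_product)
  have "card (V \<union> SV) \<le> card V + card SV" by (rule card_Un_le)
  also have "\<dots> \<le> (card S + 1) * 2 ^ j" using cSV V(4) by simp
  also have "\<dots> < 2 ^ n" using bnd Suc.prems by simp
  finally have lt: "card (V \<union> SV) < card (vecs n)" by (simp add: card_vecs)
  have "\<not> vecs n \<subseteq> V \<union> SV"
  proof
    assume "vecs n \<subseteq> V \<union> SV"
    moreover have "finite (V \<union> SV)" using finV finS unfolding SV_def by simp
    ultimately have "card (vecs n) \<le> card (V \<union> SV)" by (rule card_mono[rotated])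
    with lt show False by simp
  qed
  then obtain x where x: "x \<in> vecs n" "x \<notin> V" "x \<notin> SV" by blast
  define V' where "V' = V \<union> vadd x ` V"
  have disj: "V \<inter> vadd x ` V = {}"
  proof (rule ccontr)
    assume "V \<inter> vadd x ` V \<noteq> {}"
    then obtain a where a: "a \<in> V" "vadd x a \<in> V" by blast
    then have "vadd (vadd x a) a \<in> V" using V(3) by blast
    then show False using x(2) by (simp add: vadd_assoc)
  qed
  have inj: "inj_on (vadd x) V"
    by (rule inj_onI) (metis vadd_self2)
  have "card V' = 2 ^ Suc j"
    unfolding V'_def using finV disj by (simp add: card_Un_disjoint card_image[OF inj] V(4))
  moreover have "V' \<subseteq> vecs n" unfolding V'_def using V(1) x(1) vadd_vecs by blast
  moreover have "vzero \<in> V'" unfolding V'_def using V(2) by simp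
  moreover have "\<forall>a\<in>V'. \<forall>b\<in>V'. vadd a b \<in> V'"
  proof (intro ballI)
    fix a b assume a: "a \<in> V'" and b: "b \<in> V'"
    show "vadd a b \<in> V'"
    proof (cases "a \<in> V")
      case aV: True
      show ?thesis
      proof (cases "b \<in> V")
        case True then show ?thesis using aV V(3) unfolding V'_def by blast
      next
        case False
        then obtain b' where b': "b' \<in> V" "b = vadd x b'" using b unfolding V'_def by blast
        have "vadd a b = vadd x (vadd a b')" using b' by (simp add: vadd_ac)
        then show ?thesis using V(3) aV b'(1) unfolding V'_def by blast
      qed
    next
      case False
      then obtain a' where a': "a' \<in> V" "a = vadd x a'" using a unfolding V'_def by blast
      show ?thesis
      proof (cases "b \<in> V")
        case True
        have "vadd a b = vadd x (vadd a' b)" using a' by (simp add: vadd_ac)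
        then show ?thesis using V(3) True a'(1) unfolding V'_def by blast
      next
        case False
        then obtain b' where b': "b' \<in> V" "b = vadd x b'" using b unfolding V'_def by blast
        have "vadd a b = vadd a' b'" using a' b' by (simp add: vadd_ac)
        then show ?thesis using V(3) a'(1) b'(1) unfolding V'_def by auto
      qed
    qed
  qed
  moreover have "V' \<inter> S = {}"
  proof (rule ccontr)
    assume "V' \<inter> S \<noteq> {}"
    then obtain a where "a \<in> V" "vadd x a \<in> S" using V(5) unfolding V'_def by blast
    then have "vadd (vadd x a) a \<in> SV" unfolding SV_def by force
    then show False using x(3) by (simp add: vadd_assoc)
  qed
  ultimately show ?case by blast
qed

definition badset :: "nat \<Rightarrow> (nat \<Rightarrow> nat \<Rightarrow> bool) \<Rightarrow> nat \<Rightarrow> bvec set" where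
  "badset n E d = (\<lambda>(v, u). vadd u (Rv n E v)) `
     {(v, u). v \<in> vecs n \<and> u \<in> vecs n \<and> (v, u) \<noteq> (vzero, vzero) \<and> wgt n v u < d}"

lemma card_bad: "card (badset n E d) \<le> (\<Sum>s=1..d-1. 3 ^ s * (n choose s))"
proof -
  let ?Pd = "{(v, u). v \<in> vecs n \<and> u \<in> vecs n \<and> (v, u) \<noteq> (vzero, vzero) \<and> wgt n v u < d}"
  let ?Ps = "\<lambda>s. {(v, u). v \<in> vecs n \<and> u \<in> vecs n \<and> wgt n v u = s}"
  have sub: "?Pd \<subseteq> (\<Union>s\<in>{1..d-1}. ?Ps s)"
  proof
    fix p assume p: "p \<in> ?Pd"
    obtain v u where pv: "p = (v, u)" by (cases p)
    have vu: "v \<in> vecs n" "u \<in> vecs n" "(v, u) \<noteq> (vzero, vzero)" "wgt n v u < d" using p pv by auto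
    have "wgt n v u \<noteq> 0" using wgt_zero[OF vu(1,2)] vu(3) by auto
    then have "wgt n v u \<in> {1..d-1}" using vu(4) by auto
    then show "p \<in> (\<Union>s\<in>{1..d-1}. ?Ps s)" using pv vu by auto
  qed
  have fin: "finite (\<Union>s\<in>{1..d-1}. ?Ps s)"
    by (rule finite_subset[of _ "vecs n \<times> vecs n"]) auto
  have "card (badset n E d) \<le> card ?Pd" unfolding badset_def by (rule card_image_le) (rule finite_subset[of _ "vecs n \<times> vecs n"], auto)
  also have "\<dots> \<le> card (\<Union>s\<in>{1..d-1}. ?Ps s)" by (rule card_mono[OF fin sub])
  also have "\<dots> \<le> (\<Sum>s\<in>{1..d-1}. card (?Ps s))" by (rule card_UN_le) simp
  also have "\<dots> \<le> (\<Sum>s=1..d-1. 3 ^ s * (n choose s))" by (rule sum_mono) (rule card_wgt_s)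
  finally show ?thesis .
qed

lemma bad_vecs: "badset n E d \<subseteq> vecs n"
  unfolding badset_def using vadd_vecs Rv_vecs by auto

lemma finite_bad: "finite (badset n E d)"
  by (rule finite_subset[OF bad_vecs finite_vecs])

lemma zero_notin_bad:
  assumes sg: "simple_graph n E" and d: "d \<le> graph_state_distance n E"
  shows "vzero \<notin> badset n E d"
proof
  assume "vzero \<in> badset n E d"
  then obtain v u where vu: "v \<in> vecs n" "u \<in> vecs n" "(v, u) \<noteq> (vzero, vzero)" "wgt n v u < d"
    and z: "vadd u (Rv n E v) = vzero" unfolding badset_def by auto
  have "u = Rv n E v" using z by (auto simp: vadd_def vzero_def fun_eq_iff)
  then have "(v, u) \<in> stab_group n E" using Rv_stab[OF sg vu(1)] by simp
  then have "graph_state_distance n E \<le> wgt n v u" using gsd_le vu(3) by blast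
  with vu(4) d show False by simp
qed

lemma pure_main:
  assumes sgr: "simple_graph n E" and gs: "is_graph_state n E s"
    and Cv: "C \<subseteq> vecs n" and Cc: "\<forall>x\<in>C. \<forall>y\<in>C. vadd x y \<in> C"
    and CS: "C \<inter> badset n E d = {}"
  shows "pure_code n (cws_code n s C) d"
  unfolding pure_code_def
proof (intro ballI impI)
  fix v u psi phi
  assume v: "v \<in> vecs n" and u: "u \<in> vecs n" and nz: "(v, u) \<noteq> (vzero, vzero)"
    and w: "wgt n v u < d" and psi: "psi \<in> cws_code n s C" and phi: "phi \<in> cws_code n s C"
  let ?B = "(\<lambda>c. pauli n vzero c s) ` C"
  have "\<forall>b\<in>?B. \<forall>b'\<in>?B. qinner n b' (pauli n v u b) = 0"
  proof (intro ballI)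
    fix b b' assume "b \<in> ?B" "b' \<in> ?B"
    then obtain c c' where c: "c \<in> C" "b = pauli n vzero c s" and c': "c' \<in> C" "b' = pauli n vzero c' s"
      by blast
    define ww where "ww = vadd (vadd u c) c'"
    have z: "qinner n s (pauli n v ww s) = 0"
    proof (cases "\<exists>i<n. dotp n (adj_row n E i) v \<noteq> ww i")
      case True
      then obtain i where "i < n" "dotp n (adj_row n E i) v \<noteq> ww i" by blast
      then show ?thesis using key[OF gs sgr] by blast
    next
      case False
      have cv: "c \<in> vecs n" "c' \<in> vecs n" using c(1) c'(1) Cv by auto
      have "vadd u (Rv n E v) = vadd c c'"
      proof
        fix i
        show "vadd u (Rv n E v) i = vadd c c' i"
        proof (cases "i < n")
          case True
          then have "dotp n (adj_row n E i) v = ww i" using False by blast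
          then show ?thesis using True by (auto simp: Rv_def ww_def vadd_def)
        next
          case False
          then show ?thesis using u cv by (auto simp: Rv_def vadd_def vecs_def)
        qed
      qed
      moreover have "vadd u (Rv n E v) \<in> badset n E d"
        unfolding badset_def using v u nz w by force
      moreover have "vadd c c' \<in> C" using Cc c(1) c'(1) by blast
      ultimately have "vadd c c' \<in> C \<inter> badset n E d" by simp
      then show ?thesis using CS by simp
    qed
    have "qinner n b' (pauli n v u b) = qinner n (pauli n vzero c' s) (pauli n v (vadd u c) s)"
      using c c' by (simp add: pauli_Z_right)
    also have "\<dots> = qinner n s (pauli n vzero c' (pauli n v (vadd u c) s))"
      using pauli_adj[of vzero n c' s] by (simp add: sg_def)
    also have "\<dots> = sg (dotp n c' v) * qinner n s (pauli n v ww s)"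
      unfolding pauli_Z_left qinner_scale ww_def ..
    also have "\<dots> = 0" using z by simp
    finally show "qinner n b' (pauli n v u b) = 0" .
  qed
  then show "qinner n phi (pauli n v u psi) = 0"
    by (rule qinner_span_zero[OF _ psi[unfolded cws_code_def] phi[unfolded cws_code_def]])
qed

lemma dist_main:
  assumes "pure_code n Q d"
  shows "distance_ge n Q d"
  unfolding distance_ge_def detectable_def
proof (intro ballI impI allI)
  fix v u B
  assume v: "v \<in> vecs n" and u: "u \<in> vecs n" and w: "wgt n v u < d" and B: "orthonormal_basis n Q B"
  show "\<exists>c. \<forall>i\<in>B. \<forall>j\<in>B. qinner n j (pauli n v u i) = (if i = j then c else 0)"
  proof (cases "(v, u) = (vzero, vzero)")
    case True
    then show ?thesis using B unfolding orthonormal_basis_def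
      by (intro exI[of _ 1]) (auto simp: pauli_id)
  next
    case False
    have "\<forall>i\<in>B. \<forall>j\<in>B. qinner n j (pauli n v u i) = 0"
      using assms B v u w False unfolding pure_code_def orthonormal_basis_def by blast
    then show ?thesis by (intro exI[of _ 0]) simp
  qed
qed

theorem mainTheorem6:
  fixes n k d :: nat and E :: "nat \<Rightarrow> nat \<Rightarrow> bool"
  assumes "simple_graph n E"
    and "1 \<le> k" and "k \<le> n" and "1 \<le> d"
    and "d \<le> graph_state_distance n E"
    and "(\<Sum>s=1..d-1. (3::real) ^ s * real (n choose s)) < (2 ^ n - 1) / (2 ^ k - 1)"
  shows "\<exists>C. linear_code n k C \<and>
           (\<forall>s. is_graph_state n E s \<longrightarrow>
              distance_ge n (cws_code n s C) d \<and> pure_code n (cws_code n s C) d)"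
proof -
  let ?S = "badset n E d"
  have "card ?S \<le> (\<Sum>s=1..d-1. 3 ^ s * (n choose s))" by (rule card_bad)
  then have "real (card ?S) \<le> real (\<Sum>s=1..d-1. 3 ^ s * (n choose s))" by (simp only: of_nat_le_iff)
  also have "\<dots> = (\<Sum>s=1..d-1. (3::real) ^ s * real (n choose s))" by simp
  finally have bnd: "\<forall>j<k. (card ?S + 1) * 2 ^ j < (2::nat) ^ n"
    using numeric[OF assms(2,3) _ assms(6)] by blast
  obtain C where C: "C \<subseteq> vecs n" "vzero \<in> C" "\<forall>x\<in>C. \<forall>y\<in>C. vadd x y \<in> C" "card C = 2 ^ k" "C \<inter> ?S = {}"
    using greedy[OF finite_bad bad_vecs zero_notin_bad[OF assms(1,5)] bnd le_refl] by blast
  have lc: "linear_code n k C" unfolding linear_code_def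
    by (rule conjI[OF C(1) conjI[OF C(2) conjI[OF C(3) C(4)]]])
  moreover have "\<forall>s. is_graph_state n E s \<longrightarrow>
              distance_ge n (cws_code n s C) d \<and> pure_code n (cws_code n s C) d"
  proof (intro allI impI conjI)
    fix s assume gs: "is_graph_state n E s"
    show "pure_code n (cws_code n s C) d" by (rule pure_main[OF assms(1) gs C(1) C(3) C(5)])
    then show "distance_ge n (cws_code n s C) d" by (rule dist_main)
  qed
  ultimately show ?thesis by (intro exI[of _ C] conjI)
qed

end
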